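(* Let $(X,d)$ be a separable metric space, $T\colon X\to X$ a Borel measurable map and $\mu$ a $T$-invariant Borel probability measure on $X$. Let $(s_n)_{n\ge1}$ be a scale sequence which is either monotone or steady. Then the proximality gauge $\psi(x,y)=\liminf_{n\to\infty} s_n\, d(T^nx,T^ny)$ satisfies $\psi(Tx,Ty)=\psi(x,y)$ for $\mu\times\mu$-almost every $(x,y)\in X^2$.
   Context: A scale sequence is a sequence $(s_n)_{n\ge1}$ of positive reals with $s_n\to\infty$. It is monotone if $s_{n+1}\ge s_n$ for all sufficiently large $n$, and steady if $\lim_{n\to\infty}s_{n+1}/s_n=1$. *)

theory Defs
  imports "HOL-Probability.Probability"
begin

text \<open>A scale sequence: positive reals (indexed from 1) tending to infinity.
  The value at index 0 is irrelevant.\<close>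
definition scale_seq :: "(nat \<Rightarrow> real) \<Rightarrow> bool" where
  "scale_seq s \<longleftrightarrow> (\<forall>n\<ge>1. s n > 0) \<and> filterlim s at_top sequentially"

definition monotone_scale :: "(nat \<Rightarrow> real) \<Rightarrow> bool" where
  "monotone_scale s \<longleftrightarrow> (\<forall>\<^sub>F n in sequentially. s (Suc n) \<ge> s n)"

definition steady_scale :: "(nat \<Rightarrow> real) \<Rightarrow> bool" where
  "steady_scale s \<longleftrightarrow> ((\<lambda>n. s (Suc n) / s n) \<longlonglongrightarrow> 1)"

definition prox_gauge :: "(nat \<Rightarrow> real) \<Rightarrow> ('a::metric_space \<Rightarrow> 'a) \<Rightarrow> 'a \<Rightarrow> 'a \<Rightarrow> ereal" where
  "prox_gauge s T x y = liminf (\<lambda>n. ereal (s n * dist ((T ^^ n) x) ((T ^^ n) y)))"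

end

theory Submission
  imports Defs
begin

lemma funpow_meas:
  fixes T :: "'a::topological_space \<Rightarrow> 'a"
  assumes "T \<in> borel \<rightarrow>\<^sub>M borel"
  shows "(T ^^ n) \<in> borel \<rightarrow>\<^sub>M borel"
proof (induction n)
  case 0 have "T ^^ 0 = id" by simp then show ?case by (simp add: measurable_id)
next
  case (Suc n)
  then show ?case using assms by (simp add: measurable_comp)
qed

lemma gauge_shift:
  "prox_gauge s T (T x) (T y) = liminf (\<lambda>n. ereal (s n * dist ((T ^^ Suc n) x) ((T ^^ Suc n) y)))"
  unfolding prox_gauge_def by (simp add: funpow_swap1)

lemma gauge_shift2:
  "prox_gauge s T x y = liminf (\<lambda>n. ereal (s (Suc n) * dist ((T ^^ Suc n) x) ((T ^^ Suc n) y)))"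
  unfolding prox_gauge_def using liminf_shift[of "\<lambda>n. ereal (s n * dist ((T ^^ n) x) ((T ^^ n) y))"]
  by simp

lemma gauge_mono:
  assumes "monotone_scale s"
  shows "prox_gauge s T (T x) (T y) \<le> prox_gauge s T x y"
  unfolding gauge_shift gauge_shift2
proof (rule Liminf_mono)
  show "\<forall>\<^sub>F n in sequentially. ereal (s n * dist ((T ^^ Suc n) x) ((T ^^ Suc n) y))
      \<le> ereal (s (Suc n) * dist ((T ^^ Suc n) x) ((T ^^ Suc n) y))"
    using assms unfolding monotone_scale_def
    by (rule eventually_mono) (simp add: mult_right_mono)
qed

lemma gauge_steady:
  assumes "scale_seq s" "steady_scale s"
  shows "prox_gauge s T (T x) (T y) = prox_gauge s T x y"
proof -
  define d where "d n = dist ((T ^^ Suc n) x) ((T ^^ Suc n) y)" for n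
  have pos: "s (Suc n) > 0" for n using assms(1) unfolding scale_seq_def by auto
  have lim: "(\<lambda>n. s n / s (Suc n)) \<longlonglongrightarrow> 1"
    using tendsto_inverse[OF assms(2)[unfolded steady_scale_def]] by simp
  have lim': "(\<lambda>n. ereal (s n / s (Suc n))) \<longlonglongrightarrow> 1"
    using lim by (simp add: one_ereal_def)
  have eq: "ereal (s n * d n) = ereal (s n / s (Suc n)) * ereal (s (Suc n) * d n)" for n
    using pos[of n] by simp
  have "prox_gauge s T (T x) (T y) = liminf (\<lambda>n. ereal (s n / s (Suc n)) * ereal (s (Suc n) * d n))"
    unfolding gauge_shift d_def[symmetric] eq ..
  also have "\<dots> = 1 * liminf (\<lambda>n. ereal (s (Suc n) * d n))"
    by (rule ereal_liminf_lim_mult[OF lim']) auto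
  also have "\<dots> = prox_gauge s T x y" unfolding gauge_shift2 d_def by simp
  finally show ?thesis .
qed

theorem proposition3p8:
  fixes T :: "'a::{metric_space, second_countable_topology} \<Rightarrow> 'a"
    and M :: "'a measure"
    and s :: "nat \<Rightarrow> real"
  assumes "T \<in> borel \<rightarrow>\<^sub>M borel"
    and "sets M = sets borel"
    and "prob_space M"
    and "\<And>A. A \<in> sets borel \<Longrightarrow> emeasure M (T -` A) = emeasure M A"
    and "scale_seq s"
    and "monotone_scale s \<or> steady_scale s"
  shows "AE z in M \<Otimes>\<^sub>M M. prox_gauge s T (T (fst z)) (T (snd z)) = prox_gauge s T (fst z) (snd z)"
proof (cases "steady_scale s")
  case True
  show ?thesis by (intro AE_I2) (rule gauge_steady[OF assms(5) True])
next
  case False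
  then have mono: "monotone_scale s" using assms(6) by simp
  interpret p: prob_space M by fact
  interpret pp: pair_prob_space M M by unfold_locales
  define P where "P = M \<Otimes>\<^sub>M M"
  define g where "g z = prox_gauge s T (fst z) (snd z)" for z
  define S where "S = (\<lambda>(x::'a, y::'a). (T x, T y))"
  have spM: "space M = UNIV" using sets_eq_imp_space_eq[OF assms(2)] by simp
  have TM: "T \<in> M \<rightarrow>\<^sub>M M" using assms(1) measurable_cong_sets[OF assms(2) assms(2)] by simp
  have dM: "distr M M T = M"
  proof (rule measure_eqI)
    fix A assume "A \<in> sets (distr M M T)"
    then show "emeasure (distr M M T) A = emeasure M A"
      using assms(2,4) TM spM by (simp add: emeasure_distr)
  qed simp
  have dP: "distr P P S = P"
    unfolding P_def S_def
    using pair_measure_distr[OF TM TM] dM p.sigma_finite_measure_axioms by simp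
  have SP: "S \<in> P \<rightarrow>\<^sub>M P" unfolding P_def S_def case_prod_beta
    by (intro measurable_Pair measurable_compose[OF measurable_fst TM] measurable_compose[OF measurable_snd TM])
  have gm: "g \<in> borel_measurable P"
  proof -
    have "(\<lambda>z. ereal (s n * dist ((T ^^ n) (fst z)) ((T ^^ n) (snd z)))) \<in> borel_measurable P" for n
    proof -
      have Tn: "(T ^^ n) \<in> M \<rightarrow>\<^sub>M borel"
        by (subst measurable_cong_sets[OF assms(2) refl]) (rule funpow_meas[OF assms(1)])
      show ?thesis unfolding P_def using Tn by measurable
    qed
    then show ?thesis unfolding g_def prox_gauge_def by (rule borel_measurable_liminf)
  qed
  have le: "g (S z) \<le> g z" for z
    unfolding g_def S_def using gauge_mono[OF mono] by (cases z) simp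
  have spP: "space P = UNIV" unfolding P_def by (simp add: space_pair_measure spM)
  have null: "AE z in P. \<not> (g (S z) \<le> ereal (real_of_rat q) \<and> ereal (real_of_rat q) < g z)" for q
  proof -
    define A where "A = {z. ereal (real_of_rat q) < g z}"
    note gm[measurable]
    have "{z \<in> space P. ereal (real_of_rat q) < g z} \<in> sets P" by measurable
    then have A: "A \<in> sets P" unfolding A_def using spP by simp
    have SA: "S -` A \<in> sets P" using measurable_sets[OF SP A] spP by simp
    have "emeasure (distr P P S) A = emeasure P (S -` A \<inter> space P)"
      by (rule emeasure_distr[OF SP A])
    then have eqm: "emeasure P (S -` A) = emeasure P A"
      using dP spP by simp
    have sub: "S -` A \<subseteq> A"
    proof
      fix z assume "z \<in> S -` A"
      then have "ereal (real_of_rat q) < g (S z)" unfolding A_def by simp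
      also have "\<dots> \<le> g z" by (rule le)
      finally show "z \<in> A" unfolding A_def by simp
    qed
    have "emeasure P (A - S -` A) = emeasure P A - emeasure P (S -` A)"
      using A SA sub unfolding P_def by (intro emeasure_Diff) (auto intro: pp.P.emeasure_finite)
    then have "emeasure P (A - S -` A) = 0" using eqm unfolding P_def by (simp add: pp.P.emeasure_finite)
    then have "AE z in P. z \<notin> A - S -` A"
      using A SA by (intro AE_I'[of "A - S -` A"]) auto
    then show ?thesis by eventually_elim (auto simp: A_def)
  qed
  then have "AE z in P. \<forall>q. \<not> (g (S z) \<le> ereal (real_of_rat q) \<and> ereal (real_of_rat q) < g z)"
    by (simp add: AE_all_countable)
  then have "AE z in P. g (S z) = g z"
  proof eventually_elim
    case (elim z)
    show ?case
    proof (rule ccontr)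
      assume "g (S z) \<noteq> g z"
      then have "g (S z) < g z" using le[of z] by simp
      then obtain r :: rat where "g (S z) < real_of_rat r" "real_of_rat r < g z"
        using ereal_dense3 by blast
      then show False using elim[rule_format, of r] by simp
    qed
  qed
  then show ?thesis unfolding P_def g_def S_def by (simp add: case_prod_beta)
qed

end
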